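(* For every maximal consistent set $X_0$, the canonical epistemic transition system $ETS(X_0)$ is regular, i.e., for every state $w\in W$ and every $\mathbf{s}\in\Phi^{\mathcal{A}}$ there is $w'\in W$ with $(w,\mathbf{s},w')\in M$.
   Context: Fix a set of agents $\mathcal{A}$; a coalition is a subset of $\mathcal{A}$. Language $\Phi$: $\phi ::= p \mid \neg\phi \mid \phi\to\phi \mid \mathsf{K}_C\phi \mid \mathsf{H}_C\phi$ ($C\subseteq\mathcal{A}$). Proof system: propositional tautologies; Truth $\mathsf{K}_C\phi\to\phi$; Negative Introspection $\neg\mathsf{K}_C\phi\to\mathsf{K}_C\neg\mathsf{K}_C\phi$; Distributivity $\mathsf{K}_C(\phi\to\psi)\to(\mathsf{K}_C\phi\to\mathsf{K}_C\psi)$; Monotonicity $\mathsf{K}_C\phi\to\mathsf{K}_D\phi$ ($C\subseteq D$); Strategic Positive Introspection $\mathsf{H}_C\phi\to\mathsf{K}_C\mathsf{H}_C\phi$; Cooperation $\mathsf{H}_C(\phi\to\psi)\to(\mathsf{H}_D\phi\to\mathsf{H}_{C\cup D}\psi)$ ($C\cap D=\varnothing$); Empty Coalition $\mathsf{K}_\varnothing\phi\to\mathsf{H}_\varnothing\phi$; Perfect Recall $\mathsf{H}_D\phi\to\mathsf{H}_D\mathsf{K}_C\phi$ ($D\subseteq C\ne\varnothing$); Unachievability of Falsehood $\neg\mathsf{H}_C\bot$; rules Necessitation ($\phi/\mathsf{K}_C\phi$), Strategic Necessitation ($\phi/\mathsf{H}_C\phi$), Modus Ponens. Consistency and maximal consistency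 are with respect to this system. Canonical system $ETS(X_0)=(W,\{\sim_a\}_{a\in\mathcal{A}},\Phi,M,\pi)$ for a maximal consistent $X_0$: $W$ is the set of all finite sequences $X_0,C_1,X_1,\dots,C_n,X_n$ ($n\ge0$) where each $X_i$ is a maximal consistent set, each $C_i\subseteq\mathcal{A}$, and $\{\phi\mid\mathsf{K}_{C_i}\phi\in X_{i-1}\}\subseteq X_i$ for $i\ge1$. For $w=X_0,C_1,\dots,C_n,X_n$ and $w'=X_0,C'_1,\dots,C'_m,X'_m$, $w\sim_a w'$ iff there is $k\le\min\{n,m\}$ with $X_i=X'_i$ and $C_i=C'_i$ for $0<i\le k$, $a\in C_i$ for $k<i\le n$ and $a\in C'_i$ for $k<i\le m$. The domain of choices is $\Phi$. $hd(w)$ denotes the last set of $w$. $(w,\mathbf{s},w')\in M$ (for $\mathbf{s}\in\Phi^{\mathcal{A}}$) iff for every coalition $D$ and formula $\phi$, if $\mathsf{H}_D\phi\in hd(w)$ and $(\mathbf{s})_a=\phi$ for all $a\in D$, then $\phi\in hd(w')$. $\pi(p)=\{w\in W\mid p\in hd(w)\}$. *)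

theory Defs
  imports Main
begin

datatype ('p, 'a) fm =
    Atom 'p
  | Neg "('p, 'a) fm"
  | Imp "('p, 'a) fm" "('p, 'a) fm"
  | Kn "'a set" "('p, 'a) fm"
  | Hw "'a set" "('p, 'a) fm"

definition FBot :: "('p, 'a) fm" where
  "FBot = Neg (Imp (Atom undefined) (Atom undefined))"

text \<open>Propositional evaluation: modal formulas (and atoms) are treated as propositional atoms.\<close>
fun peval :: "(('p, 'a) fm \<Rightarrow> bool) \<Rightarrow> ('p, 'a) fm \<Rightarrow> bool" where
  "peval v (Atom p) = v (Atom p)"
| "peval v (Neg f) = (\<not> peval v f)"
| "peval v (Imp f g) = (peval v f \<longrightarrow> peval v g)"
| "peval v (Kn C f) = v (Kn C f)"
| "peval v (Hw C f) = v (Hw C f)"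

definition tautology :: "('p, 'a) fm \<Rightarrow> bool" where
  "tautology f = (\<forall>v. peval v f)"

inductive derivable :: "('p, 'a) fm \<Rightarrow> bool" where
  Taut: "tautology f \<Longrightarrow> derivable f"
| Truth: "derivable (Imp (Kn C f) f)"
| NegIntro: "derivable (Imp (Neg (Kn C f)) (Kn C (Neg (Kn C f))))"
| Distr: "derivable (Imp (Kn C (Imp f g)) (Imp (Kn C f) (Kn C g)))"
| Mono: "C \<subseteq> D \<Longrightarrow> derivable (Imp (Kn C f) (Kn D f))"
| StratPosIntro: "derivable (Imp (Hw C f) (Kn C (Hw C f)))"
| Coop: "C \<inter> D = {} \<Longrightarrow> derivable (Imp (Hw C (Imp f g)) (Imp (Hw D f) (Hw (C \<union> D) g)))"
| EmptyCoal: "derivable (Imp (Kn {} f) (Hw {} f))"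
| PerfRecall: "D \<subseteq> C \<Longrightarrow> C \<noteq> {} \<Longrightarrow> derivable (Imp (Hw D f) (Hw D (Kn C f)))"
| UnachFalse: "derivable (Neg (Hw C FBot))"
| NecK: "derivable f \<Longrightarrow> derivable (Kn C f)"
| NecH: "derivable f \<Longrightarrow> derivable (Hw C f)"
| MP: "derivable (Imp f g) \<Longrightarrow> derivable f \<Longrightarrow> derivable g"

definition consistent :: "('p, 'a) fm set \<Rightarrow> bool" where
  "consistent X = (\<not> (\<exists>fs. set fs \<subseteq> X \<and> derivable (foldr Imp fs FBot)))"

definition maxcons :: "('p, 'a) fm set \<Rightarrow> bool" where
  "maxcons X = (consistent X \<and> (\<forall>f. f \<notin> X \<longrightarrow> \<not> consistent (insert f X)))"

text \<open>A state X0,C1,X1,...,Cn,Xn is represented by the list [(C1,X1),...,(Cn,Xn)]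
  (X0 is fixed). seqset X0 ws i is the set X_i.\<close>
definition seqset :: "('p, 'a) fm set \<Rightarrow> ('a set \<times> ('p, 'a) fm set) list \<Rightarrow> nat \<Rightarrow> ('p, 'a) fm set" where
  "seqset X0 ws i = (if i = 0 then X0 else snd (ws ! (i - 1)))"

definition canon_W :: "('p, 'a) fm set \<Rightarrow> ('a set \<times> ('p, 'a) fm set) list set" where
  "canon_W X0 = {ws. \<forall>i<length ws. maxcons (snd (ws ! i)) \<and>
       {f. Kn (fst (ws ! i)) f \<in> seqset X0 ws i} \<subseteq> snd (ws ! i)}"

definition hdset :: "('p, 'a) fm set \<Rightarrow> ('a set \<times> ('p, 'a) fm set) list \<Rightarrow> ('p, 'a) fm set" where
  "hdset X0 ws = seqset X0 ws (length ws)"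

definition canon_M :: "('p, 'a) fm set \<Rightarrow> ('a set \<times> ('p, 'a) fm set) list \<Rightarrow> ('a \<Rightarrow> ('p, 'a) fm)
    \<Rightarrow> ('a set \<times> ('p, 'a) fm set) list \<Rightarrow> bool" where
  "canon_M X0 w s w' = (\<forall>D f. Hw D f \<in> hdset X0 w \<and> (\<forall>a\<in>D. s a = f) \<longrightarrow> f \<in> hdset X0 w')"

definition regular :: "'w set \<Rightarrow> ('w \<Rightarrow> 's \<Rightarrow> 'w \<Rightarrow> bool) \<Rightarrow> bool" where
  "regular W M = (\<forall>w\<in>W. \<forall>s. \<exists>w'\<in>W. M w s w')"

end

theory Submission
  imports Defs
begin

lemma peval_foldr: "peval v (foldr Imp fs g) = ((\<forall>x\<in>set fs. peval v x) \<longrightarrow> peval v g)"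
  by (induction fs) auto

lemma prop_cons:
  assumes "\<forall>p\<in>set ps. derivable p" "tautology (foldr Imp ps c)"
  shows "derivable c"
  using assms
proof (induction ps arbitrary: c rule: rev_induct)
  case Nil then show ?case by (simp add: derivable.Taut)
next
  case (snoc x xs)
  have "tautology (foldr Imp xs (Imp x c))"
    using snoc.prems(2) by (simp add: tautology_def peval_foldr)
  then have "derivable (Imp x c)" using snoc.IH snoc.prems(1) by simp
  then show ?case using snoc.prems(1) derivable.MP by auto
qed

lemma chain_fin:
  assumes "chain\<^sub>\<subseteq> C" "C \<noteq> {}" "set fs \<subseteq> \<Union>C"
  shows "\<exists>X\<in>C. set fs \<subseteq> X"
  using assms
proof (induction fs)
  case Nil then show ?case by auto
next
  case (Cons f fs)
  then obtain X where X: "X \<in> C" "set fs \<subseteq> X" by auto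
  from Cons.prems obtain Z where Z: "Z \<in> C" "f \<in> Z" by auto
  from assms(1) X Z have "X \<subseteq> Z \<or> Z \<subseteq> X" unfolding chain_subset_def by blast
  then show ?case using X Z by auto
qed

lemma lindenbaum:
  assumes "consistent S"
  shows "\<exists>Y. S \<subseteq> Y \<and> maxcons Y"
proof -
  let ?A = "{Y. S \<subseteq> Y \<and> consistent Y}"
  have "\<forall>C\<in>chains ?A. \<exists>U\<in>?A. \<forall>X\<in>C. X \<subseteq> U"
  proof
    fix C assume C: "C \<in> chains ?A"
    show "\<exists>U\<in>?A. \<forall>X\<in>C. X \<subseteq> U"
    proof (cases "C = {}")
      case True then show ?thesis using assms by auto
    next
      case False
      have "\<Union>C \<in> ?A"
      proof -
        have "S \<subseteq> \<Union>C" using C False unfolding chains_def by auto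
        moreover have "consistent (\<Union>C)"
          unfolding consistent_def
        proof
          assume "\<exists>fs. set fs \<subseteq> \<Union>C \<and> derivable (foldr Imp fs FBot)"
          then obtain fs where fs: "set fs \<subseteq> \<Union>C" "derivable (foldr Imp fs FBot)" by blast
          obtain X where "X \<in> C" "set fs \<subseteq> X"
            using chain_fin[OF _ False fs(1)] C unfolding chains_def by auto
          then show False using fs C unfolding chains_def consistent_def by auto
        qed
        ultimately show ?thesis by simp
      qed
      then show ?thesis by blast
    qed
  qed
  from Zorn_Lemma2[OF this] obtain M where M: "M \<in> ?A" "\<forall>X\<in>?A. M \<subseteq> X \<longrightarrow> X = M" by blast
  have "maxcons M"
    unfolding maxcons_def
  proof (intro conjI allI impI)
    show "consistent M" using M by simp
  next
    fix f assume "f \<notin> M"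
    show "\<not> consistent (insert f M)"
    proof
      assume "consistent (insert f M)"
      then have "insert f M \<in> ?A" using M by auto
      then have "insert f M = M" using M by blast
      with \<open>f \<notin> M\<close> show False by auto
    qed
  qed
  then show ?thesis using M by auto
qed

lemma key:
  assumes "\<forall>x\<in>set fs. Kn {} x \<in> H \<or> (\<exists>D. Hw D x \<in> H \<and> (\<forall>a\<in>D. s a = x))"
    and "derivable (foldr Imp fs g)"
  shows "\<exists>E gs. set gs \<subseteq> H \<and> derivable (foldr Imp gs (Hw E g)) \<and> E \<subseteq> {a. s a \<in> set fs}"
  using assms
proof (induction fs arbitrary: g)
  case Nil
  then have "derivable (Hw {} g)" by (simp add: derivable.NecH)
  then show ?case by (intro exI[of _ "{}"] exI[of _ "[]"]) simp
next
  case (Cons f rest)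
  show ?case
  proof (cases "f \<in> set rest")
    case True
    have "derivable (foldr Imp rest g)"
      by (rule prop_cons[of "[foldr Imp (f#rest) g]"])
        (use Cons.prems True in \<open>auto simp: tautology_def peval_foldr\<close>)
    moreover have "\<forall>x\<in>set rest. Kn {} x \<in> H \<or> (\<exists>D. Hw D x \<in> H \<and> (\<forall>a\<in>D. s a = x))"
      using Cons.prems by simp
    ultimately obtain E gs where "set gs \<subseteq> H" "derivable (foldr Imp gs (Hw E g))" "E \<subseteq> {a. s a \<in> set rest}"
      using Cons.IH by blast
    then show ?thesis by auto
  next
    case False
    have "derivable (foldr Imp rest (Imp f g))"
      by (rule prop_cons[of "[foldr Imp (f#rest) g]"])
        (use Cons.prems in \<open>auto simp: tautology_def peval_foldr\<close>)
    then obtain E gs where E: "set gs \<subseteq> H" "derivable (foldr Imp gs (Hw E (Imp f g)))"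
        "E \<subseteq> {a. s a \<in> set rest}"
      using Cons.IH[of "Imp f g"] Cons.prems(1) by auto
    from Cons.prems(1) have "Kn {} f \<in> H \<or> (\<exists>D. Hw D f \<in> H \<and> (\<forall>a\<in>D. s a = f))" by simp
    then show ?thesis
    proof
      assume K: "Kn {} f \<in> H"
      have c: "derivable (Imp (Hw E (Imp f g)) (Imp (Hw {} f) (Hw (E \<union> {}) g)))"
        by (rule derivable.Coop) simp
      have e: "derivable (Imp (Kn {} f) (Hw {} f))" by (rule derivable.EmptyCoal)
      have "derivable (foldr Imp (gs @ [Kn {} f]) (Hw E g))"
        by (rule prop_cons[of "[foldr Imp gs (Hw E (Imp f g)), Imp (Hw E (Imp f g)) (Imp (Hw {} f) (Hw (E \<union> {}) g)), Imp (Kn {} f) (Hw {} f)]"])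
          (use E c e in \<open>auto simp: tautology_def peval_foldr\<close>)
      then show ?thesis using E K by (intro exI[of _ E] exI[of _ "gs @ [Kn {} f]"]) auto
    next
      assume "\<exists>D. Hw D f \<in> H \<and> (\<forall>a\<in>D. s a = f)"
      then obtain D where D: "Hw D f \<in> H" "\<forall>a\<in>D. s a = f" by blast
      have disj: "E \<inter> D = {}" using D E(3) False by auto
      have c: "derivable (Imp (Hw E (Imp f g)) (Imp (Hw D f) (Hw (E \<union> D) g)))"
        by (rule derivable.Coop[OF disj])
      have "derivable (foldr Imp (gs @ [Hw D f]) (Hw (E \<union> D) g))"
        by (rule prop_cons[of "[foldr Imp gs (Hw E (Imp f g)), Imp (Hw E (Imp f g)) (Imp (Hw D f) (Hw (E \<union> D) g))]"])
          (use E c in \<open>auto simp: tautology_def peval_foldr\<close>)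
      then show ?thesis using E D by (intro exI[of _ "E \<union> D"] exI[of _ "gs @ [Hw D f]"]) auto
    qed
  qed
qed

lemma succ_consistent:
  assumes "consistent H"
  shows "consistent ({f. Kn {} f \<in> H} \<union> {f. \<exists>D. Hw D f \<in> H \<and> (\<forall>a\<in>D. s a = f)})"
  unfolding consistent_def
proof
  assume "\<exists>fs. set fs \<subseteq> {f. Kn {} f \<in> H} \<union> {f. \<exists>D. Hw D f \<in> H \<and> (\<forall>a\<in>D. s a = f)} \<and> derivable (foldr Imp fs FBot)"
  then obtain fs where fs: "set fs \<subseteq> {f. Kn {} f \<in> H} \<union> {f. \<exists>D. Hw D f \<in> H \<and> (\<forall>a\<in>D. s a = f)}"
    "derivable (foldr Imp fs FBot)" by blast
  then obtain E gs where g: "set gs \<subseteq> H" "derivable (foldr Imp gs (Hw E FBot))"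
    using key[of fs H s FBot] by blast
  have u: "derivable (Neg (Hw E FBot))" by (rule derivable.UnachFalse)
  have "derivable (foldr Imp gs FBot)"
    by (rule prop_cons[of "[foldr Imp gs (Hw E FBot), Neg (Hw E FBot)]"])
      (use g u in \<open>auto simp: tautology_def peval_foldr\<close>)
  then show False using g assms unfolding consistent_def by blast
qed

lemma seqset_app: "i \<le> length w \<Longrightarrow> seqset X0 (w @ [x]) i = seqset X0 w i"
  by (cases i) (auto simp: seqset_def nth_append)

theorem lemma25:
  fixes X0 :: "('p, 'a) fm set"
  assumes "maxcons X0"
  shows "regular (canon_W X0) (canon_M X0)"
  unfolding regular_def
proof (intro ballI allI)
  fix w s assume w: "w \<in> canon_W X0"
  let ?H = "hdset X0 w"
  have "maxcons ?H"
  proof (cases "w = []")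
    case True then show ?thesis using assms by (simp add: hdset_def seqset_def)
  next
    case False
    then have "length w - 1 < length w" by simp
    then show ?thesis using w False by (simp add: hdset_def seqset_def canon_W_def)
  qed
  then have "consistent ?H" by (simp add: maxcons_def)
  from lindenbaum[OF succ_consistent[OF this, of s]]
  obtain Y where Y: "{f. Kn {} f \<in> ?H} \<union> {f. \<exists>D. Hw D f \<in> ?H \<and> (\<forall>a\<in>D. s a = f)} \<subseteq> Y" "maxcons Y"
    by blast
  let ?w' = "w @ [({}, Y)]"
  have "?w' \<in> canon_W X0"
    unfolding canon_W_def
  proof (intro CollectI allI impI)
    fix i assume i: "i < length ?w'"
    show "maxcons (snd (?w' ! i)) \<and> {f. Kn (fst (?w' ! i)) f \<in> seqset X0 ?w' i} \<subseteq> snd (?w' ! i)"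
    proof (cases "i < length w")
      case True
      then show ?thesis using w seqset_app[of i w X0 "({}, Y)"]
        by (auto simp: canon_W_def nth_append)
    next
      case False
      then have "i = length w" using i by simp
      then show ?thesis using Y seqset_app[of i w X0 "({}, Y)"]
        by (auto simp: hdset_def)
    qed
  qed
  moreover have "canon_M X0 w s ?w'"
  proof -
    have "hdset X0 ?w' = Y" by (simp add: hdset_def seqset_def)
    then show ?thesis unfolding canon_M_def using Y(1) by blast
  qed
  ultimately show "\<exists>w'\<in>canon_W X0. canon_M X0 w s w'" by blast
qed

end
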